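(* Let $G$ be a group with a finite generating set $S$ not containing the identity, and let $d_W$ and $d_C$ be the word metric and the cardinal metric on $G$ with respect to $S$. If $(G,d_W)$ has infinite diameter, then $(G,d_W)$ and $(G,d_C)$ are not quasi-isometric.
   Context: The word metric: $d_W(g,g)=0$ and for $g\ne h$, $d_W(g,h)$ is the least $n\in\mathbb{N}$ such that $g^{-1}h=s_1^{\epsilon_1}\cdots s_n^{\epsilon_n}$ with $s_i\in S$, $\epsilon_i\in\{\pm1\}$. The cardinal norm is $\|g\| = \min\{|A| : A\subseteq S,\ g\in\langle A\rangle\}$, where $\langle A\rangle$ is the subgroup generated by $A$, and $d_C(g,h)=\|g^{-1}h\|$. *)

theory Defs
  imports "HOL-Algebra.Algebra"
begin

definition word_eval :: "('a, 'b) monoid_scheme \<Rightarrow> ('a \<times> bool) list \<Rightarrow> 'a" where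
  "word_eval G ws = foldr (\<lambda>(s, e) acc. (if e then s else inv\<^bsub>G\<^esub> s) \<otimes>\<^bsub>G\<^esub> acc) ws \<one>\<^bsub>G\<^esub>"

definition word_norm :: "('a, 'b) monoid_scheme \<Rightarrow> 'a set \<Rightarrow> 'a \<Rightarrow> nat" where
  "word_norm G S g = (LEAST n. \<exists>ws. length ws = n \<and> fst ` set ws \<subseteq> S \<and> word_eval G ws = g)"

definition word_metric :: "('a, 'b) monoid_scheme \<Rightarrow> 'a set \<Rightarrow> 'a \<Rightarrow> 'a \<Rightarrow> nat" where
  "word_metric G S g h = (if g = h then 0 else word_norm G S (inv\<^bsub>G\<^esub> g \<otimes>\<^bsub>G\<^esub> h))"

definition cardinal_norm :: "('a, 'b) monoid_scheme \<Rightarrow> 'a set \<Rightarrow> 'a \<Rightarrow> nat" where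
  "cardinal_norm G S g = (LEAST n. \<exists>A. A \<subseteq> S \<and> card A = n \<and> g \<in> generate G A)"

definition cardinal_metric :: "('a, 'b) monoid_scheme \<Rightarrow> 'a set \<Rightarrow> 'a \<Rightarrow> 'a \<Rightarrow> nat" where
  "cardinal_metric G S g h = cardinal_norm G S (inv\<^bsub>G\<^esub> g \<otimes>\<^bsub>G\<^esub> h)"

definition quasi_isometric :: "'a set \<Rightarrow> ('a \<Rightarrow> 'a \<Rightarrow> real) \<Rightarrow> 'c set \<Rightarrow> ('c \<Rightarrow> 'c \<Rightarrow> real) \<Rightarrow> bool" where
  "quasi_isometric P d1 Q d2 \<longleftrightarrow>
     (\<exists>f L K C. f ` P \<subseteq> Q \<and> L \<ge> 1 \<and> K \<ge> 0 \<and> C \<ge> 0 \<and>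
        (\<forall>x\<in>P. \<forall>y\<in>P. d1 x y / L - K \<le> d2 (f x) (f y) \<and> d2 (f x) (f y) \<le> L * d1 x y + K) \<and>
        (\<forall>z\<in>Q. \<exists>x\<in>P. d2 z (f x) \<le> C))"

end

theory Submission
  imports Defs
begin

theorem mainTheorem6:
  fixes G (structure) and S :: "'a set"
  assumes "group G"
    and "finite S" and "S \<subseteq> carrier G" and "\<one>\<^bsub>G\<^esub> \<notin> S"
    and "generate G S = carrier G"
    and "\<not> (\<exists>D. \<forall>g\<in>carrier G. \<forall>h\<in>carrier G. word_metric G S g h \<le> D)"
  shows "\<not> quasi_isometric (carrier G) (\<lambda>g h. real (word_metric G S g h))
                            (carrier G) (\<lambda>g h. real (cardinal_metric G S g h))"
proof
  assume "quasi_isometric (carrier G) (\<lambda>g h. real (word_metric G S g h))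
                            (carrier G) (\<lambda>g h. real (cardinal_metric G S g h))"
  then obtain f L K where f: "f ` carrier G \<subseteq> carrier G" and L: "L \<ge> 1" and K: "K \<ge> 0"
    and qi: "\<forall>x\<in>carrier G. \<forall>y\<in>carrier G.
      real (word_metric G S x y) / L - K \<le> real (cardinal_metric G S (f x) (f y))"
    unfolding quasi_isometric_def by blast
  have cb: "cardinal_metric G S g h \<le> card S" if "g \<in> carrier G" "h \<in> carrier G" for g h
  proof -
    have "inv g \<otimes> h \<in> carrier G" using that assms(1) by (simp add: group.subgroup_self subgroup.m_closed group.inv_closed)
    then have "inv g \<otimes> h \<in> generate G S" using assms(5) by simp
    then show ?thesis unfolding cardinal_metric_def cardinal_norm_def
      by (intro Least_le) blast
  qed
  have "word_metric G S x y \<le> nat \<lceil>L * (real (card S) + K)\<rceil>" if "x \<in> carrier G" "y \<in> carrier G" for x y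
  proof -
    have "real (word_metric G S x y) / L - K \<le> real (card S)"
      using qi that cb[of "f x" "f y"] f by fastforce
    then have "real (word_metric G S x y) / L \<le> real (card S) + K" by linarith
    then have "real (word_metric G S x y) \<le> L * (real (card S) + K)"
      using L by (simp add: divide_le_eq mult.commute)
    then show ?thesis by linarith
  qed
  then show False using assms(6) by blast
qed

end
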